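(* Assume Hypotheses 1, 2 and 3 (see context). For any fixed $\mathbf{z}\in\mathbb{R}^m$, the map $\Gamma\to\mathbb{R}^n$, $x\mapsto H(x)\mathbf{z}$, is continuous.
   Context: System $\dot x=F(x)$ with $F=(f,g)$, i.e. $\dot a=f(a,z)$, $\dot z=g(a,z)$, $(a,z)\in\mathbb{R}^n\times\mathbb{R}^m$, $X=\mathbb{R}^n\times\mathbb{R}^m$, flow $\Phi(t,x)$. Euclidean inner product, norm, operator norm. $\mathcal{L}(x_1,x_2)=\|a_2-a_1\|^2-\|z_2-z_1\|^2$, $\mathcal{C}(x)=\{x'\in X:\mathcal{L}(x',x)\ge0\}$, $\mathbf{0}$ the zero vector of $X$; $\Pi(a,z)=a$, $\Pi_\perp(a,z)=z$; $\mathbb{B}_d(x)=\{(a',z'):\|a'-a\|\le d,\|z'-z\|\le d\}$. $\Gamma\subseteq U$ positively invariant means $\Phi(t,x)$ is defined for all $t\ge0$ for $x\in\Gamma$ and $\Phi(t,\Gamma)\subseteq\Gamma$. Hypothesis 1: $U$ open and convex, and there is $d>0$ with $\mathcal{C}(x)\cap U\subset\mathbb{B}_d(x)$ for all $x\in U$. Hypothesis 2: $f,g$ are $C^1$ on $U$; there exist continuous $\alpha>0$, $\ell\ge0$ on $U$ and $c_1>0$ with, for all $x\in U$: $\langle a',D_af(x)a'\rangle\ge\alpha(x)\|a'\|^2$; $\langle z',D_zg(x)z'\rangle\le\ell(x)\|z'\|^2$; $\alpha(x)\ge\ell(x)+\|D_zf(x)\|+\|D_ag(x)\|+c_1$. Hypothesis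 3: $\Gamma\subset U$ is positively invariant and $\Pi_\perp(\Gamma)=\Pi_\perp(U)$. For $x\in\Gamma$, $Q(t,x)$ ($t\ge0$) denotes the fundamental matrix solution of $\dot{\mathbf{x}}=DF(\Phi(t,x))\mathbf{x}$ with $Q(0,x)=I$, and $T(x):=\{\mathbf{x}\in X: \mathcal{L}(Q(t,x)\mathbf{x},\mathbf{0})\le0\text{ for all }t\ge0\}$. Under these hypotheses each $T(x)$ is a linear subspace meeting each slice $\{(\mathbf{a},\mathbf{z}):\mathbf{a}\in\mathbb{R}^n\}$ in exactly one point, so there is a unique linear map $H(x):\mathbb{R}^m\to\mathbb{R}^n$ with $T(x)=\{(H(x)\mathbf{z},\mathbf{z}):\mathbf{z}\in\mathbb{R}^m\}$. *)

theory Defs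
  imports "HOL-Analysis.Analysis"
begin

text \<open>State space X = R^n x R^m is modelled as the product type 'a \<times> 'b of two
  Euclidean spaces; a point is (a, z).\<close>

definition Lfun :: "('a::euclidean_space \<times> 'b::euclidean_space) \<Rightarrow> ('a \<times> 'b) \<Rightarrow> real" where
  "Lfun x1 x2 = (norm (fst x2 - fst x1))^2 - (norm (snd x2 - snd x1))^2"

definition Ccone :: "('a::euclidean_space \<times> 'b::euclidean_space) \<Rightarrow> ('a \<times> 'b) set" where
  "Ccone x = {x'. Lfun x' x \<ge> 0}"

definition boxd :: "real \<Rightarrow> ('a::euclidean_space \<times> 'b::euclidean_space) \<Rightarrow> ('a \<times> 'b) set" where
  "boxd d x = {x'. norm (fst x' - fst x) \<le> d \<and> norm (snd x' - snd x) \<le> d}"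

text \<open>T(x): Q is the fundamental solution (as a function of the initial vector).\<close>
definition Tsp :: "(real \<Rightarrow> ('a::euclidean_space \<times> 'b::euclidean_space) \<Rightarrow> ('a \<times> 'b) \<Rightarrow> ('a \<times> 'b))
     \<Rightarrow> ('a \<times> 'b) \<Rightarrow> ('a \<times> 'b) set" where
  "Tsp Q x = {v. \<forall>t\<ge>0. Lfun (Q t x v) 0 \<le> 0}"

definition Hmap :: "(real \<Rightarrow> ('a::euclidean_space \<times> 'b::euclidean_space) \<Rightarrow> ('a \<times> 'b) \<Rightarrow> ('a \<times> 'b))
     \<Rightarrow> ('a \<times> 'b) \<Rightarrow> 'b \<Rightarrow> 'a" where
  "Hmap Q x zz = (THE aa. (aa, zz) \<in> Tsp Q x)"

end

theory Submission
  imports Defs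
begin


lemma mono_open:
  fixes h h' :: "real \<Rightarrow> real"
  assumes "a \<le> b" "continuous_on {a..b} h"
    "\<And>s. a < s \<Longrightarrow> s < b \<Longrightarrow> (h has_real_derivative h' s) (at s)"
    "\<And>s. a < s \<Longrightarrow> s < b \<Longrightarrow> h' s \<ge> 0"
  shows "h a \<le> h b"
  by (rule DERIV_nonneg_imp_increasing_open[OF assms(1) _ assms(2)]) (use assms in blast)

lemma gron:
  fixes h h' :: "real \<Rightarrow> real"
  assumes ab: "a \<le> b" and hc: "continuous_on {a..b} h"
    and hd: "\<And>s. a < s \<Longrightarrow> s < b \<Longrightarrow> (h has_real_derivative h' s) (at s)"
    and hle: "\<And>s. a < s \<Longrightarrow> s < b \<Longrightarrow> h' s \<le> c * h s + e"
    and c: "c \<ge> 0" and e: "e \<ge> 0"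
  shows "h b \<le> exp (c * (b - a)) * (h a + e * (b - a))"
proof -
  define \<phi> where "\<phi> = (\<lambda>s. e * (s - a) - exp (- c * (s - a)) * h s)"
  define D where "D = (\<lambda>s. e - (exp (- c * (s - a)) * h' s - c * exp (- c * (s - a)) * h s))"
  have "\<phi> a \<le> \<phi> b"
  proof (rule mono_open[OF ab, of \<phi> D])
    show "continuous_on {a..b} \<phi>" unfolding \<phi>_def
      by (intro continuous_intros hc)
    fix s assume s: "a < s" "s < b"
    have E: "((\<lambda>s. exp (- c * (s - a))) has_real_derivative (exp (- c * (s - a)) * (- c))) (at s)"
      by (auto intro!: derivative_eq_intros)
    have "(\<phi> has_real_derivative (e * 1 - (exp (- c * (s - a)) * h' s + (exp (- c * (s - a)) * (- c)) * h s))) (at s)"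
    proof -
      have L: "((\<lambda>s. e * (s - a)) has_real_derivative e * 1) (at s)"
        by (auto intro!: derivative_eq_intros)
      show ?thesis unfolding \<phi>_def by (rule DERIV_diff[OF L DERIV_mult'[OF E hd[OF s]]])
    qed
    thus "(\<phi> has_real_derivative D s) (at s)"
      unfolding D_def by (simp add: algebra_simps)
    have "exp (- c * (s - a)) \<le> 1" using c s by simp
    hence E1: "exp (- c * (s - a)) * e \<le> 1 * e" using e by (intro mult_right_mono) auto
    have "exp (- c * (s - a)) * h' s \<le> exp (- c * (s - a)) * (c * h s + e)"
      using hle[OF s] by (intro mult_left_mono) auto
    hence "exp (- c * (s - a)) * h' s \<le> c * exp (- c * (s - a)) * h s + exp (- c * (s - a)) * e"
      by (simp add: algebra_simps)
    thus "0 \<le> D s"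
      using E1 unfolding D_def by linarith
  qed
  hence "exp (- c * (b - a)) * h b \<le> h a + e * (b - a)" unfolding \<phi>_def by simp
  hence "exp (c * (b - a)) * (exp (- c * (b - a)) * h b) \<le> exp (c * (b - a)) * (h a + e * (b - a))"
    by (intro mult_left_mono) auto
  moreover have "exp (c * (b - a)) * (exp (- c * (b - a)) * h b) = h b"
  proof -
    have "exp (c * (b - a)) * exp (- c * (b - a)) = 1"
      by (metis exp_minus_inverse mult_minus_left)
    thus ?thesis by (metis mult.assoc mult_1)
  qed
  ultimately show ?thesis by linarith
qed

lemma gron_rev:
  fixes h h' :: "real \<Rightarrow> real"
  assumes ab: "a \<le> b" and hc: "continuous_on {a..b} h"
    and hd: "\<And>s. a < s \<Longrightarrow> s < b \<Longrightarrow> (h has_real_derivative h' s) (at s)"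
    and hle: "\<And>s. a < s \<Longrightarrow> s < b \<Longrightarrow> h' s \<ge> - c * h s"
  shows "h a \<le> exp (c * (b - a)) * h b"
proof -
  define \<phi> where "\<phi> = (\<lambda>s. exp (c * (s - a)) * h s)"
  define D where "D = (\<lambda>s. exp (c * (s - a)) * (h' s + c * h s))"
  have "\<phi> a \<le> \<phi> b"
  proof (rule mono_open[OF ab, of \<phi> D])
    show "continuous_on {a..b} \<phi>" unfolding \<phi>_def
      by (intro continuous_intros hc)
    fix s assume s: "a < s" "s < b"
    have E: "((\<lambda>s. exp (c * (s - a))) has_real_derivative (exp (c * (s - a)) * c)) (at s)"
      by (auto intro!: derivative_eq_intros)
    have "(\<phi> has_real_derivative (exp (c * (s - a)) * h' s + (exp (c * (s - a)) * c) * h s)) (at s)"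
      unfolding \<phi>_def by (rule DERIV_mult'[OF E hd[OF s]])
    thus "(\<phi> has_real_derivative D s) (at s)"
      unfolding D_def by (simp add: algebra_simps)
    show "0 \<le> D s" using hle[OF s] unfolding D_def by simp
  qed
  thus ?thesis unfolding \<phi>_def by simp
qed

lemma first_exit:
  fixes h :: "real \<Rightarrow> real"
  assumes ab: "a \<le> b" and hc: "continuous_on {a..b} h" and ha: "h a < c"
    and step: "\<And>s1. a \<le> s1 \<Longrightarrow> s1 \<le> b \<Longrightarrow> (\<And>s. a \<le> s \<Longrightarrow> s < s1 \<Longrightarrow> h s < c) \<Longrightarrow> h s1 < c"
  shows "h b < c"
proof -
  define Z where "Z = {a..b} \<inter> h -` {c..}"
  have cl: "closed Z" unfolding Z_def by (rule continuous_closed_preimage[OF hc]) auto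
  have "Z = {}"
  proof (rule ccontr)
    assume ne: "Z \<noteq> {}"
    have bdd: "bdd_below Z" unfolding Z_def by (auto intro: bdd_belowI[of _ a])
    have I: "Inf Z \<in> Z" by (rule closed_contains_Inf[OF ne bdd cl])
    have "h (Inf Z) < c"
    proof (rule step)
      show "a \<le> Inf Z" "Inf Z \<le> b" using I unfolding Z_def by auto
      fix s assume s: "a \<le> s" "s < Inf Z"
      have "s \<notin> Z" using s cInf_lower[OF _ bdd, of s] by force
      moreover have "s \<le> b" using s I unfolding Z_def by auto
      ultimately show "h s < c" using s unfolding Z_def by auto
    qed
    thus False using I unfolding Z_def by auto
  qed
  thus ?thesis using ab unfolding Z_def by auto
qed



lemma sq_deriv:
  fixes y :: "real \<Rightarrow> 'v::real_inner"
  assumes "(y has_vector_derivative y') (at t within S)"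
  shows "((\<lambda>s. y s \<bullet> y s) has_real_derivative 2 * (y t \<bullet> y')) (at t within S)"
proof -
  have d: "(y has_derivative (\<lambda>h. h *\<^sub>R y')) (at t within S)"
    using assms by (simp add: has_vector_derivative_def)
  have "((\<lambda>s. y s \<bullet> y s) has_derivative (\<lambda>h. y t \<bullet> (h *\<^sub>R y') + (h *\<^sub>R y') \<bullet> y t)) (at t within S)"
    by (rule has_derivative_inner[OF d d])
  moreover have "(\<lambda>h. y t \<bullet> (h *\<^sub>R y') + (h *\<^sub>R y') \<bullet> y t) = (*) (2 * (y t \<bullet> y'))"
    by (auto simp: inner_commute algebra_simps)
  ultimately have "((\<lambda>s. y s \<bullet> y s) has_derivative (*) (2 * (y t \<bullet> y'))) (at t within S)" by simp
  thus ?thesis by (simp add: has_field_derivative_def)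
qed

lemma fst_vd:
  assumes "(y has_vector_derivative y') F"
  shows "((\<lambda>s. fst (y s)) has_vector_derivative fst y') F"
  using bounded_linear.has_vector_derivative[OF bounded_linear_fst assms] .

lemma snd_vd:
  assumes "(y has_vector_derivative y') F"
  shows "((\<lambda>s. snd (y s)) has_vector_derivative snd y') F"
  using bounded_linear.has_vector_derivative[OF bounded_linear_snd assms] .

lemma vd_at:
  assumes "(y has_vector_derivative y') (at t within {0..})" "0 < t"
  shows "(y has_vector_derivative y') (at t)"
proof -
  have "(y has_vector_derivative y') (at t within {0<..})"
    by (rule has_vector_derivative_within_subset[OF assms(1)]) auto
  thus ?thesis using assms(2) has_vector_derivative_within_open[of t "{0<..}"] by auto
qed

locale setting =
  fixes f :: "('a::euclidean_space \<times> 'b::euclidean_space) \<Rightarrow> 'a"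
    and g :: "('a \<times> 'b) \<Rightarrow> 'b"
    and f' :: "('a \<times> 'b) \<Rightarrow> ('a \<times> 'b) \<Rightarrow>\<^sub>L 'a"
    and g' :: "('a \<times> 'b) \<Rightarrow> ('a \<times> 'b) \<Rightarrow>\<^sub>L 'b"
    and U \<Gamma> :: "('a \<times> 'b) set"
    and \<alpha> ell :: "('a \<times> 'b) \<Rightarrow> real"
    and c1 :: real
    and \<Phi> :: "real \<Rightarrow> ('a \<times> 'b) \<Rightarrow> ('a \<times> 'b)"
    and Q :: "real \<Rightarrow> ('a \<times> 'b) \<Rightarrow> ('a \<times> 'b) \<Rightarrow> ('a \<times> 'b)"
  assumes U_open: "open U" and U_convex: "convex U"
    and H1: "\<exists>d>0. \<forall>x\<in>U. Ccone x \<inter> U \<subseteq> boxd d x"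
    and f_deriv: "\<And>x. x \<in> U \<Longrightarrow> (f has_derivative blinfun_apply (f' x)) (at x)"
    and g_deriv: "\<And>x. x \<in> U \<Longrightarrow> (g has_derivative blinfun_apply (g' x)) (at x)"
    and f'_cont: "continuous_on U f'" and g'_cont: "continuous_on U g'"
    and \<alpha>_cont: "continuous_on U \<alpha>" and ell_cont: "continuous_on U ell"
    and \<alpha>_pos: "\<And>x. x \<in> U \<Longrightarrow> \<alpha> x > 0"
    and ell_nonneg: "\<And>x. x \<in> U \<Longrightarrow> ell x \<ge> 0"
    and c1_pos: "c1 > 0"
    and H2a: "\<And>x a'. x \<in> U \<Longrightarrow> a' \<bullet> f' x (a', 0) \<ge> \<alpha> x * (norm a')^2"
    and H2z: "\<And>x z'. x \<in> U \<Longrightarrow> z' \<bullet> g' x (0, z') \<le> ell x * (norm z')^2"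
    and H2c: "\<And>x. x \<in> U \<Longrightarrow>
       \<alpha> x \<ge> ell x + onorm (\<lambda>z'. f' x (0, z')) + onorm (\<lambda>a'. g' x (a', 0)) + c1"
    and \<Gamma>_sub: "\<Gamma> \<subseteq> U"
    and flow0: "\<And>x. x \<in> \<Gamma> \<Longrightarrow> \<Phi> 0 x = x"
    and flow_deriv: "\<And>x t. x \<in> \<Gamma> \<Longrightarrow> t \<ge> 0 \<Longrightarrow>
       ((\<lambda>s. \<Phi> s x) has_vector_derivative (f (\<Phi> t x), g (\<Phi> t x))) (at t within {0..})"
    and flow_inv: "\<And>x t. x \<in> \<Gamma> \<Longrightarrow> t \<ge> 0 \<Longrightarrow> \<Phi> t x \<in> \<Gamma>"
    and proj: "snd ` \<Gamma> = snd ` U"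
    and Q0: "\<And>x v. x \<in> \<Gamma> \<Longrightarrow> Q 0 x v = v"
    and Q_deriv: "\<And>x v t. x \<in> \<Gamma> \<Longrightarrow> t \<ge> 0 \<Longrightarrow>
       ((\<lambda>s. Q s x v) has_vector_derivative
          (f' (\<Phi> t x) (Q t x v), g' (\<Phi> t x) (Q t x v))) (at t within {0..})"
begin

definition Ap where "Ap p v = (blinfun_apply (f' p) v, blinfun_apply (g' p) v)"
definition Nf where "Nf p = onorm (\<lambda>z'. blinfun_apply (f' p) (0, z'))"
definition Ng where "Ng p = onorm (\<lambda>a'. blinfun_apply (g' p) (a', 0))"
definition LL :: "'a \<times> 'b \<Rightarrow> real" where "LL v = fst v \<bullet> fst v - snd v \<bullet> snd v"

lemma bl_f0: "bounded_linear (\<lambda>z'. blinfun_apply (f' p) (0, z'))"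
  by (rule bounded_linear_compose[OF blinfun.bounded_linear_right])
     (rule bounded_linear_Pair[OF bounded_linear_zero bounded_linear_ident])

lemma bl_g0: "bounded_linear (\<lambda>a'. blinfun_apply (g' p) (a', 0))"
  by (rule bounded_linear_compose[OF blinfun.bounded_linear_right])
     (rule bounded_linear_Pair[OF bounded_linear_ident bounded_linear_zero])

lemma Nf_ge0: "0 \<le> Nf p" unfolding Nf_def by (rule onorm_pos_le[OF bl_f0])
lemma Ng_ge0: "0 \<le> Ng p" unfolding Ng_def by (rule onorm_pos_le[OF bl_g0])

lemma Nf_bound: "norm (blinfun_apply (f' p) (0, z)) \<le> Nf p * norm z"
  unfolding Nf_def by (rule onorm[OF bl_f0])
lemma Ng_bound: "norm (blinfun_apply (g' p) (a, 0)) \<le> Ng p * norm a"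
  unfolding Ng_def by (rule onorm[OF bl_g0])

lemma split_f: "blinfun_apply (f' p) v = blinfun_apply (f' p) (fst v, 0) + blinfun_apply (f' p) (0, snd v)"
proof -
  have "v = (fst v, 0) + (0, snd v)" by simp
  hence "blinfun_apply (f' p) v = blinfun_apply (f' p) ((fst v, 0) + (0, snd v))" by metis
  thus ?thesis by (simp only: blinfun.add_right)
qed

lemma split_g: "blinfun_apply (g' p) v = blinfun_apply (g' p) (fst v, 0) + blinfun_apply (g' p) (0, snd v)"
proof -
  have "v = (fst v, 0) + (0, snd v)" by simp
  hence "blinfun_apply (g' p) v = blinfun_apply (g' p) ((fst v, 0) + (0, snd v))" by metis
  thus ?thesis by (simp only: blinfun.add_right)
qed

lemma Ia:
  assumes p: "p \<in> U"
  shows "fst v \<bullet> fst (Ap p v) \<ge> \<alpha> p * (norm (fst v))^2 - Nf p * norm (fst v) * norm (snd v)"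
proof -
  have "fst v \<bullet> fst (Ap p v) = fst v \<bullet> blinfun_apply (f' p) (fst v, 0) + fst v \<bullet> blinfun_apply (f' p) (0, snd v)"
    unfolding Ap_def by (simp add: split_f[of p v] inner_add_right)
  moreover have "fst v \<bullet> blinfun_apply (f' p) (fst v, 0) \<ge> \<alpha> p * (norm (fst v))^2" by (rule H2a[OF p])
  moreover have "- (fst v \<bullet> blinfun_apply (f' p) (0, snd v)) \<le> Nf p * norm (fst v) * norm (snd v)"
  proof -
    have "- (fst v \<bullet> blinfun_apply (f' p) (0, snd v)) \<le> norm (fst v) * norm (blinfun_apply (f' p) (0, snd v))"
      using Cauchy_Schwarz_ineq2[of "fst v" "blinfun_apply (f' p) (0, snd v)"] by linarith
    also have "\<dots> \<le> norm (fst v) * (Nf p * norm (snd v))"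
      by (intro mult_left_mono Nf_bound) auto
    finally show ?thesis by (simp add: algebra_simps)
  qed
  ultimately show ?thesis by linarith
qed

lemma Iz:
  assumes p: "p \<in> U"
  shows "snd v \<bullet> snd (Ap p v) \<le> Ng p * norm (fst v) * norm (snd v) + ell p * (norm (snd v))^2"
proof -
  have "snd v \<bullet> snd (Ap p v) = snd v \<bullet> blinfun_apply (g' p) (fst v, 0) + snd v \<bullet> blinfun_apply (g' p) (0, snd v)"
    unfolding Ap_def by (simp add: split_g[of p v] inner_add_right)
  moreover have "snd v \<bullet> blinfun_apply (g' p) (0, snd v) \<le> ell p * (norm (snd v))^2" by (rule H2z[OF p])
  moreover have "snd v \<bullet> blinfun_apply (g' p) (fst v, 0) \<le> Ng p * norm (fst v) * norm (snd v)"
  proof -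
    have "snd v \<bullet> blinfun_apply (g' p) (fst v, 0) \<le> norm (snd v) * norm (blinfun_apply (g' p) (fst v, 0))"
      using Cauchy_Schwarz_ineq2[of "snd v" "blinfun_apply (g' p) (fst v, 0)"] by linarith
    also have "\<dots> \<le> norm (snd v) * (Ng p * norm (fst v))"
      by (intro mult_left_mono Ng_bound) auto
    finally show ?thesis by (simp add: algebra_simps)
  qed
  ultimately show ?thesis by linarith
qed

lemma pos_cone:
  assumes p: "p \<in> U" and c: "norm (snd v) \<le> norm (fst v)"
  shows "fst v \<bullet> fst (Ap p v) \<ge> (ell p + Ng p + c1) * (norm (fst v))^2"
proof -
  have "Nf p * (norm (fst v) * norm (snd v)) \<le> Nf p * (norm (fst v) * norm (fst v))"
    using c by (intro mult_left_mono Nf_ge0) auto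
  moreover have "(ell p + Nf p + Ng p + c1) * (norm (fst v))^2 \<le> \<alpha> p * (norm (fst v))^2"
    using H2c[OF p] unfolding Nf_def Ng_def by (intro mult_right_mono) auto
  ultimately show ?thesis using Ia[OF p, of v] by (simp add: power2_eq_square algebra_simps)
qed

lemma neg_cone:
  assumes p: "p \<in> U" and c: "norm (fst v) \<le> norm (snd v)"
  shows "snd v \<bullet> snd (Ap p v) \<le> (Ng p + ell p) * (norm (snd v))^2"
proof -
  have "Ng p * (norm (fst v) * norm (snd v)) \<le> Ng p * (norm (snd v) * norm (snd v))"
    using c by (intro mult_left_mono mult_right_mono Ng_ge0) auto
  thus ?thesis using Iz[OF p, of v] by (simp add: power2_eq_square algebra_simps)
qed

lemma cone_deriv:
  assumes p: "p \<in> U" and c: "norm (snd v) \<le> norm (fst v)"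
  shows "fst v \<bullet> fst (Ap p v) - snd v \<bullet> snd (Ap p v) \<ge> c1 * (norm (fst v))^2"
proof -
  have "Ng p * (norm (fst v) * norm (snd v)) \<le> Ng p * (norm (fst v) * norm (fst v))"
    using c by (intro mult_left_mono Ng_ge0) auto
  moreover have "ell p * (norm (snd v))^2 \<le> ell p * (norm (fst v))^2"
    using c ell_nonneg[OF p] by (intro mult_left_mono power_mono) auto
  ultimately show ?thesis using Iz[OF p, of v] pos_cone[OF p c]
    by (simp add: power2_eq_square algebra_simps)
qed


definition sol where
  "sol x y \<longleftrightarrow> (\<forall>t\<ge>0. (y has_vector_derivative Ap (\<Phi> t x) (y t)) (at t within {0..}))"

lemma Q_sol: "x \<in> \<Gamma> \<Longrightarrow> sol x (\<lambda>s. Q s x v)"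
  unfolding sol_def Ap_def using Q_deriv by auto

lemma sol_cont: assumes "sol x y" shows "continuous_on {0..} y"
  unfolding continuous_on_eq_continuous_within
  using assms has_vector_derivative_continuous unfolding sol_def by fastforce

lemma sol_at: "sol x y \<Longrightarrow> 0 < t \<Longrightarrow> (y has_vector_derivative Ap (\<Phi> t x) (y t)) (at t)"
  unfolding sol_def by (intro vd_at) auto

lemma Phi_cont: assumes "x \<in> \<Gamma>" shows "continuous_on {0..} (\<lambda>s. \<Phi> s x)"
  unfolding continuous_on_eq_continuous_within
  using assms flow_deriv has_vector_derivative_continuous by fastforce

lemma Phi_U: "x \<in> \<Gamma> \<Longrightarrow> 0 \<le> s \<Longrightarrow> \<Phi> s x \<in> U"
  using flow_inv \<Gamma>_sub by blast

lemma Ap_diff: "Ap p (u - w) = Ap p u - Ap p w"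
  unfolding Ap_def by (simp add: blinfun.diff_right)
lemma Ap_add: "Ap p (u + w) = Ap p u + Ap p w"
  unfolding Ap_def by (simp add: blinfun.add_right)
lemma Ap_scale: "Ap p (c *\<^sub>R u) = c *\<^sub>R Ap p u"
  unfolding Ap_def by (simp add: blinfun.scaleR_right)

lemma sol_diff: assumes "sol x y" "sol x w" shows "sol x (\<lambda>s. y s - w s)"
  using assms unfolding sol_def by (auto simp: Ap_diff intro!: has_vector_derivative_diff)

lemma sol_add: assumes "sol x y" "sol x w" shows "sol x (\<lambda>s. y s + w s)"
  using assms unfolding sol_def by (auto simp: Ap_add intro!: has_vector_derivative_add)

lemma sol_scale: assumes "sol x y" shows "sol x (\<lambda>s. c *\<^sub>R y s)"
  unfolding sol_def
proof (intro allI impI)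
  fix t :: real assume "0 \<le> t"
  hence "(y has_vector_derivative Ap (\<Phi> t x) (y t)) (at t within {0..})" using assms unfolding sol_def by auto
  from bounded_linear.has_vector_derivative[OF bounded_linear_scaleR_right this]
  show "((\<lambda>s. c *\<^sub>R y s) has_vector_derivative Ap (\<Phi> t x) (c *\<^sub>R y t)) (at t within {0..})"
    by (simp add: Ap_scale)
qed

lemma Ap_bound: "norm (Ap p v) \<le> (norm (f' p) + norm (g' p)) * norm v"
proof -
  have "norm (Ap p v) \<le> norm (blinfun_apply (f' p) v) + norm (blinfun_apply (g' p) v)"
    unfolding Ap_def by (rule norm_Pair_le)
  also have "\<dots> \<le> norm (f' p) * norm v + norm (g' p) * norm v"
    by (intro add_mono norm_blinfun)
  finally show ?thesis by (simp add: algebra_simps)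
qed

lemma Ap_inner: "\<bar>v \<bullet> Ap p v\<bar> \<le> (norm (f' p) + norm (g' p)) * (v \<bullet> v)"
proof -
  have "\<bar>v \<bullet> Ap p v\<bar> \<le> norm v * norm (Ap p v)" by (rule Cauchy_Schwarz_ineq2)
  also have "\<dots> \<le> norm v * ((norm (f' p) + norm (g' p)) * norm v)"
    by (intro mult_left_mono Ap_bound) auto
  finally show ?thesis by (simp add: power2_norm_eq_inner[symmetric] power2_eq_square algebra_simps)
qed

lemma traj_bound:
  assumes x: "x \<in> \<Gamma>" and T: "0 \<le> T"
  obtains M where "M \<ge> 0" "\<And>s. 0 \<le> s \<Longrightarrow> s \<le> T \<Longrightarrow> norm (f' (\<Phi> s x)) + norm (g' (\<Phi> s x)) \<le> M"
proof -
  have c: "continuous_on {0..T} (\<lambda>s. \<Phi> s x)"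
    by (rule continuous_on_subset[OF Phi_cont[OF x]]) auto
  have img: "(\<lambda>s. \<Phi> s x) ` {0..T} \<subseteq> U" using Phi_U[OF x] by auto
  have "continuous_on {0..T} (\<lambda>s. norm (f' (\<Phi> s x)) + norm (g' (\<Phi> s x)))"
    by (intro continuous_intros continuous_on_compose2[OF f'_cont c img] continuous_on_compose2[OF g'_cont c img])
  then obtain s0 where "s0 \<in> {0..T}" "\<forall>s\<in>{0..T}. norm (f' (\<Phi> s x)) + norm (g' (\<Phi> s x)) \<le> norm (f' (\<Phi> s0 x)) + norm (g' (\<Phi> s0 x))"
    using continuous_attains_sup[of "{0..T}"] T by fastforce
  thus ?thesis using that[of "norm (f' (\<Phi> s0 x)) + norm (g' (\<Phi> s0 x))"] by auto
qed

lemma sol_inner_deriv: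
  assumes "sol x y" "0 < t"
  shows "((\<lambda>s. y s \<bullet> y s) has_real_derivative 2 * (y t \<bullet> Ap (\<Phi> t x) (y t))) (at t)"
  by (rule sq_deriv[OF sol_at[OF assms]])

lemma sol_growth:
  assumes y: "sol x y" and x: "x \<in> \<Gamma>" and s: "0 \<le> s" and M: "M \<ge> 0"
    and Mb: "\<And>r. 0 \<le> r \<Longrightarrow> r \<le> s \<Longrightarrow> norm (f' (\<Phi> r x)) + norm (g' (\<Phi> r x)) \<le> M"
  shows "y s \<bullet> y s \<le> exp (2 * M * s) * (y 0 \<bullet> y 0)"
    and "y 0 \<bullet> y 0 \<le> exp (2 * M * s) * (y s \<bullet> y s)"
proof -
  have hc: "continuous_on {0..s} (\<lambda>r. y r \<bullet> y r)"
    by (intro continuous_intros continuous_on_subset[OF sol_cont[OF y]]) auto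
  have b: "\<bar>2 * (y r \<bullet> Ap (\<Phi> r x) (y r))\<bar> \<le> 2 * M * (y r \<bullet> y r)" if "0 < r" "r < s" for r
  proof -
    have "\<bar>y r \<bullet> Ap (\<Phi> r x) (y r)\<bar> \<le> (norm (f' (\<Phi> r x)) + norm (g' (\<Phi> r x))) * (y r \<bullet> y r)"
      by (rule Ap_inner)
    also have "\<dots> \<le> M * (y r \<bullet> y r)" using Mb[of r] that by (intro mult_right_mono) auto
    finally show ?thesis by simp
  qed
  have "y s \<bullet> y s \<le> exp (2 * M * (s - 0)) * (y 0 \<bullet> y 0 + 0 * (s - 0))"
  proof (rule gron[OF s hc sol_inner_deriv[OF y]])
    fix r :: real assume "0 < r" "r < s"
    from b[OF this] show "2 * (y r \<bullet> Ap (\<Phi> r x) (y r)) \<le> 2 * M * (y r \<bullet> y r) + 0"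
      unfolding abs_le_iff by linarith
  qed (use M in auto)
  thus "y s \<bullet> y s \<le> exp (2 * M * s) * (y 0 \<bullet> y 0)" by simp
  have "y 0 \<bullet> y 0 \<le> exp (2 * M * (s - 0)) * (y s \<bullet> y s)"
  proof (rule gron_rev[OF s hc sol_inner_deriv[OF y]])
    fix r :: real assume "0 < r" "r < s"
    from b[OF this] show "- (2 * M) * (y r \<bullet> y r) \<le> 2 * (y r \<bullet> Ap (\<Phi> r x) (y r))"
      unfolding abs_le_iff by linarith
  qed auto
  thus "y 0 \<bullet> y 0 \<le> exp (2 * M * s) * (y s \<bullet> y s)" by simp
qed

lemma sol_zero:
  assumes y: "sol x y" and x: "x \<in> \<Gamma>" and s: "0 \<le> s" and y0: "y 0 = 0"
  shows "y s = 0"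
proof -
  obtain M where M: "M \<ge> 0" "\<And>r. 0 \<le> r \<Longrightarrow> r \<le> s \<Longrightarrow> norm (f' (\<Phi> r x)) + norm (g' (\<Phi> r x)) \<le> M"
    using traj_bound[OF x s] by blast
  have "y s \<bullet> y s \<le> 0" using sol_growth(1)[OF y x s M] y0 by simp
  thus ?thesis by (metis inner_eq_zero_iff inner_ge_zero order_antisym)
qed

lemma sol_inj:
  assumes y: "sol x y" and x: "x \<in> \<Gamma>" and s: "0 \<le> s" and ys: "y s = 0"
  shows "y 0 = 0"
proof -
  obtain M where M: "M \<ge> 0" "\<And>r. 0 \<le> r \<Longrightarrow> r \<le> s \<Longrightarrow> norm (f' (\<Phi> r x)) + norm (g' (\<Phi> r x)) \<le> M"
    using traj_bound[OF x s] by blast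
  have "y 0 \<bullet> y 0 \<le> 0" using sol_growth(2)[OF y x s M] ys by simp
  thus ?thesis by (metis inner_eq_zero_iff inner_ge_zero order_antisym)
qed

lemma Q_lin: assumes x: "x \<in> \<Gamma>" and s: "0 \<le> s" shows "linear (Q s x)"
proof (rule linearI)
  fix u w
  have "sol x (\<lambda>r. Q r x (u + w) - (Q r x u + Q r x w))"
    by (intro sol_diff sol_add Q_sol x)
  from sol_zero[OF this x s] show "Q s x (u + w) = Q s x u + Q s x w" using Q0[OF x] by simp
next
  fix c u
  have "sol x (\<lambda>r. Q r x (c *\<^sub>R u) - c *\<^sub>R Q r x u)"
    by (intro sol_diff sol_scale Q_sol x)
  from sol_zero[OF this x s] show "Q s x (c *\<^sub>R u) = c *\<^sub>R Q s x u" using Q0[OF x] by simp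
qed

lemma Q_inj: assumes x: "x \<in> \<Gamma>" and s: "0 \<le> s" shows "inj (Q s x)"
proof -
  have "v = 0" if "Q s x v = 0" for v
    using sol_inj[OF Q_sol[OF x] x s] that Q0[OF x] by simp
  thus ?thesis using Q_lin[OF x s] by (simp add: linear_injective_0)
qed


lemma Lfun0: "Lfun v 0 = LL v"
  by (simp add: Lfun_def LL_def power2_norm_eq_inner)

lemma LL_pos_cone: "LL v > 0 \<Longrightarrow> norm (snd v) \<le> norm (fst v)"
  unfolding LL_def by (metis less_eq_real_def diff_gt_0_iff_gt norm_le)

lemma LL_neg_cone: "LL v \<le> 0 \<Longrightarrow> norm (fst v) \<le> norm (snd v)"
  unfolding LL_def by (simp add: norm_le)

lemma LL_deriv:
  assumes y: "sol x y" and t: "0 < t"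
  shows "((\<lambda>s. LL (y s)) has_real_derivative
     2 * (fst (y t) \<bullet> fst (Ap (\<Phi> t x) (y t))) - 2 * (snd (y t) \<bullet> snd (Ap (\<Phi> t x) (y t)))) (at t)"
proof -
  have d: "(y has_vector_derivative Ap (\<Phi> t x) (y t)) (at t)" by (rule sol_at[OF y t])
  have "((\<lambda>s. fst (y s) \<bullet> fst (y s) - snd (y s) \<bullet> snd (y s)) has_real_derivative
     2 * (fst (y t) \<bullet> fst (Ap (\<Phi> t x) (y t))) - 2 * (snd (y t) \<bullet> snd (Ap (\<Phi> t x) (y t)))) (at t)"
    by (rule DERIV_diff[OF sq_deriv[OF fst_vd[OF d]] sq_deriv[OF snd_vd[OF d]]])
  thus ?thesis unfolding LL_def .
qed

lemma LL_cont: assumes y: "sol x y" shows "continuous_on {0..} (\<lambda>s. LL (y s))"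
  unfolding LL_def using sol_cont[OF y] by (intro continuous_intros) auto

lemma cone_persist:
  assumes y: "sol x y" and x: "x \<in> \<Gamma>" and s0: "0 \<le> s0" "s0 \<le> s1" and pos: "LL (y s0) > 0"
  shows "LL (y s1) > 0"
proof -
  have "- LL (y s1) < 0"
  proof (rule first_exit[OF s0(2)])
    show "continuous_on {s0..s1} (\<lambda>s. - LL (y s))"
      by (intro continuous_intros continuous_on_subset[OF LL_cont[OF y]]) (use s0 in auto)
    show "- LL (y s0) < 0" using pos by simp
    fix s2 assume s2: "s0 \<le> s2" "s2 \<le> s1" and hyp: "\<And>s. s0 \<le> s \<Longrightarrow> s < s2 \<Longrightarrow> - LL (y s) < 0"
    have "LL (y s0) \<le> LL (y s2)"
    proof (rule mono_open[OF s2(1), of "\<lambda>s. LL (y s)"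
        "\<lambda>t. 2 * (fst (y t) \<bullet> fst (Ap (\<Phi> t x) (y t))) - 2 * (snd (y t) \<bullet> snd (Ap (\<Phi> t x) (y t)))"])
      show "continuous_on {s0..s2} (\<lambda>s. LL (y s))"
        by (rule continuous_on_subset[OF LL_cont[OF y]]) (use s0 in auto)
      fix r assume r: "s0 < r" "r < s2"
      show "((\<lambda>s. LL (y s)) has_real_derivative
        2 * (fst (y r) \<bullet> fst (Ap (\<Phi> r x) (y r))) - 2 * (snd (y r) \<bullet> snd (Ap (\<Phi> r x) (y r)))) (at r)"
        by (rule LL_deriv[OF y]) (use r s0 in auto)
      have "LL (y r) > 0" using hyp[of r] r by auto
      hence c: "norm (snd (y r)) \<le> norm (fst (y r))" by (rule LL_pos_cone)
      have "c1 * (norm (fst (y r)))^2 \<le> fst (y r) \<bullet> fst (Ap (\<Phi> r x) (y r)) - snd (y r) \<bullet> snd (Ap (\<Phi> r x) (y r))"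
        by (rule cone_deriv[OF Phi_U[OF x] c]) (use r s0 in auto)
      moreover have "0 \<le> c1 * (norm (fst (y r)))^2" using c1_pos by simp
      ultimately show "0 \<le> 2 * (fst (y r) \<bullet> fst (Ap (\<Phi> r x) (y r))) - 2 * (snd (y r) \<bullet> snd (Ap (\<Phi> r x) (y r)))"
        by linarith
    qed
    thus "- LL (y s2) < 0" using pos by simp
  qed
  thus ?thesis by simp
qed

lemma cone_back:
  assumes y: "sol x y" and x: "x \<in> \<Gamma>" and s0: "0 \<le> s0" "s0 \<le> s1" and neg: "LL (y s1) \<le> 0"
  shows "LL (y s0) \<le> 0"
  using cone_persist[OF y x s0] neg by force


lemma Q_surj: assumes x: "x \<in> \<Gamma>" and s: "0 \<le> s" shows "surj (Q s x)"
  by (rule linear_injective_imp_surjective[OF Q_lin[OF x s] Q_inj[OF x s]]) auto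

lemma exist_t:
  assumes x: "x \<in> \<Gamma>" and t: "0 \<le> t"
  shows "\<exists>a. \<forall>s\<in>{0..t}. LL (Q s x (a, z)) \<le> 0"
proof -
  let ?q = "Q t x"
  have lin: "linear ?q" by (rule Q_lin[OF x t])
  have inj: "inj ?q" by (rule Q_inj[OF x t])
  have sj: "surj ?q" by (rule Q_surj[OF x t])
  have qi: "?q (inv ?q w) = w" for w by (rule surj_f_inv_f[OF sj])
  have linv: "linear (inv ?q)" by (rule inj_linear_imp_inv_linear[OF lin inj])
  define \<phi> where "\<phi> zq = snd (inv ?q (0, zq))" for zq
  have linphi: "linear \<phi>" unfolding \<phi>_def
    by (intro linear_compose[OF _ linear_snd, unfolded o_def] linear_compose[OF _ linv, unfolded o_def]) 
       (auto intro: linearI)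
  have bk: "LL (Q s x (inv ?q (0, zq))) \<le> 0" if "0 \<le> s" "s \<le> t" for s zq
  proof (rule cone_back[OF Q_sol[OF x] x that])
    show "LL (Q t x (inv ?q (0, zq))) \<le> 0" using qi[of "(0, zq)"] by (simp add: LL_def)
  qed
  have "inj \<phi>"
  proof -
    have "zq = 0" if "\<phi> zq = 0" for zq
    proof -
      define v where "v = inv ?q (0, zq)"
      have v: "v = (fst v, 0)" using that unfolding \<phi>_def v_def by (metis prod.collapse)
      have "LL (Q 0 x v) \<le> 0" using bk[of 0 zq] t unfolding v_def by auto
      hence "LL v \<le> 0" using Q0[OF x] by simp
      hence "fst v \<bullet> fst v \<le> 0" using v unfolding LL_def by (metis inner_zero_left diff_zero snd_conv)
      hence "fst v = 0" by (metis inner_eq_zero_iff inner_ge_zero order_antisym)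
      hence "v = 0" using v by (simp add: zero_prod_def)
      hence "(0, zq) = ?q 0" using qi[of "(0,zq)"] unfolding v_def by simp
      thus ?thesis using linear_0[OF lin] by (simp add: zero_prod_def)
    qed
    thus ?thesis using linphi by (simp add: linear_injective_0)
  qed
  hence "surj \<phi>" by (rule linear_injective_imp_surjective[OF linphi]) auto
  then obtain zq where zq: "\<phi> zq = z" by (metis surjD)
  define v where "v = inv ?q (0, zq)"
  have "v = (fst v, z)" using zq unfolding \<phi>_def v_def by (metis prod.collapse)
  hence "\<forall>s\<in>{0..t}. LL (Q s x (fst v, z)) \<le> 0" using bk[of _ zq] unfolding v_def by (metis atLeastAtMost_iff)
  thus ?thesis by blast
qed

lemma Q_cont_v: assumes x: "x \<in> \<Gamma>" and s: "0 \<le> s" shows "continuous_on UNIV (Q s x)"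
  using Q_lin[OF x s] by (simp add: linear_conv_bounded_linear linear_continuous_on)

lemma exist_T:
  assumes x: "x \<in> \<Gamma>"
  shows "\<exists>a. (a, z) \<in> Tsp Q x"
proof -
  define F where "F n = {a. \<forall>s\<in>{0..real n}. LL (Q s x (a, z)) \<le> 0}" for n :: nat
  have "cball 0 (norm z) \<inter> (\<Inter>n\<in>UNIV. F n) \<noteq> {}"
  proof (rule compact_imp_fip_image)
    show "compact (cball (0::'a) (norm z))" by simp
    fix n :: nat
    have "F n = (\<Inter>s\<in>{0..real n}. {a. LL (Q s x (a, z)) \<le> 0})" unfolding F_def by auto
    moreover have "closed {a. LL (Q s x (a, z)) \<le> 0}" if "s \<in> {0..real n}" for s
    proof (rule closed_Collect_le)
      have "continuous_on UNIV (\<lambda>a. Q s x (a, z))"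
        using that by (intro continuous_on_compose2[OF Q_cont_v[OF x]] continuous_intros) auto
      thus "continuous_on UNIV (\<lambda>a. LL (Q s x (a, z)))" unfolding LL_def by (intro continuous_intros)
    qed auto
    ultimately show "closed (F n)" by auto
  next
    fix I :: "nat set" assume I: "finite I"
    define N where "N = Max (insert 0 I)"
    obtain a where a: "\<forall>s\<in>{0..real N}. LL (Q s x (a, z)) \<le> 0" using exist_t[OF x, of "real N"] by auto
    have "a \<in> F n" if "n \<in> I" for n
    proof -
      have "n \<le> N" unfolding N_def using I that by simp
      thus ?thesis using a unfolding F_def by auto
    qed
    moreover have "a \<in> cball 0 (norm z)"
    proof -
      have "LL (Q 0 x (a, z)) \<le> 0" using a by auto
      hence "norm a \<le> norm z" using LL_neg_cone[of "(a,z)"] Q0[OF x] by simp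
      thus ?thesis by simp
    qed
    ultimately show "cball 0 (norm z) \<inter> (\<Inter>n\<in>I. F n) \<noteq> {}" by blast
  qed
  then obtain a where a: "\<And>n. a \<in> F n" by blast
  have "(a, z) \<in> Tsp Q x" unfolding Tsp_def
  proof (intro CollectI allI impI)
    fix t :: real assume t: "0 \<le> t"
    obtain n :: nat where "t \<le> real n" using real_arch_simple by blast
    thus "Lfun (Q t x (a, z)) 0 \<le> 0" using a[of n] t unfolding F_def Lfun0 by auto
  qed
  thus ?thesis by blast
qed


lemma inner_zero_iff_le: "(v::'c::real_inner) \<bullet> v \<le> 0 \<Longrightarrow> v = 0"
  by (metis inner_eq_zero_iff inner_ge_zero order_antisym)

lemma T_neg: "(a, z) \<in> Tsp Q x \<Longrightarrow> 0 \<le> s \<Longrightarrow> LL (Q s x (a, z)) \<le> 0"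
  unfolding Tsp_def Lfun0 by auto

lemma uniq_T:
  assumes x: "x \<in> \<Gamma>" and u: "(a1, z) \<in> Tsp Q x" and w: "(a2, z) \<in> Tsp Q x"
  shows "a1 = a2"
proof (cases "z = 0")
  case True
  have "LL (Q 0 x (a1, z)) \<le> 0" "LL (Q 0 x (a2, z)) \<le> 0" using T_neg[OF u] T_neg[OF w] by auto
  hence "a1 \<bullet> a1 \<le> 0" "a2 \<bullet> a2 \<le> 0" using Q0[OF x] True by (auto simp: LL_def)
  thus ?thesis using inner_zero_iff_le by metis
next
  case zne: False
  show ?thesis
  proof (rule ccontr)
    assume ane: "a1 \<noteq> a2"
    define yu where "yu s = Q s x (a1, z)" for s
    define yw where "yw s = Q s x (a2, z)" for s
    define d where "d s = yu s - yw s" for s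
    have su: "sol x yu" unfolding yu_def by (rule Q_sol[OF x])
    have sw: "sol x yw" unfolding yw_def by (rule Q_sol[OF x])
    have sd: "sol x d" unfolding d_def[abs_def] by (rule sol_diff[OF su sw])
    have d0: "d 0 = (a1 - a2, 0)" unfolding d_def yu_def yw_def using Q0[OF x] by simp
    have p0pos: "(a1 - a2) \<bullet> (a1 - a2) > 0" using ane by simp
    have "LL (d 0) > 0" using d0 p0pos by (simp add: LL_def)
    hence posd: "LL (d s) > 0" if "0 \<le> s" for s using cone_persist[OF sd x _ that] by simp
    have negu: "LL (yu s) \<le> 0" if "0 \<le> s" for s unfolding yu_def using T_neg[OF u that] .
    have negw: "LL (yw s) \<le> 0" if "0 \<le> s" for s unfolding yw_def using T_neg[OF w that] .
    define P where "P s = fst (d s) \<bullet> fst (d s)" for s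
    define D where "D s = snd (yu s) \<bullet> snd (yu s) + snd (yw s) \<bullet> snd (yw s)" for s
    define P' where "P' r = 2 * (fst (d r) \<bullet> fst (Ap (\<Phi> r x) (d r)))" for r
    define D' where "D' r = 2 * (snd (yu r) \<bullet> snd (Ap (\<Phi> r x) (yu r))) + 2 * (snd (yw r) \<bullet> snd (Ap (\<Phi> r x) (yw r)))" for r
    define \<beta> where "\<beta> r = ell (\<Phi> r x) + Ng (\<Phi> r x)" for r
    have Dpos: "D s > 0" if s: "0 \<le> s" for s
    proof (rule ccontr)
      assume "\<not> D s > 0"
      hence "snd (yu s) \<bullet> snd (yu s) \<le> 0" unfolding D_def using inner_ge_zero[of "snd (yw s)"] by linarith
      hence "snd (yu s) = 0" by (rule inner_zero_iff_le)
      moreover have "norm (fst (yu s)) \<le> norm (snd (yu s))" by (rule LL_neg_cone[OF negu[OF s]])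
      ultimately have "yu s = 0" by (simp add: prod_eq_iff)
      hence "yu 0 = 0" by (rule sol_inj[OF su x s])
      thus False using zne Q0[OF x] unfolding yu_def by (simp add: zero_prod_def)
    qed
    have PleD: "P s \<le> 2 * D s" if s: "0 \<le> s" for s
    proof -
      have "norm (fst (d s)) \<le> norm (fst (yu s)) + norm (fst (yw s))"
        unfolding d_def by (simp add: norm_triangle_ineq4)
      also have "\<dots> \<le> norm (snd (yu s)) + norm (snd (yw s))"
        using LL_neg_cone[OF negu[OF s]] LL_neg_cone[OF negw[OF s]] by linarith
      finally have n: "norm (fst (d s)) \<le> norm (snd (yu s)) + norm (snd (yw s))" .
      have "(norm (fst (d s)))^2 \<le> (norm (snd (yu s)) + norm (snd (yw s)))^2"
        by (rule power_mono[OF n]) simp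
      also have "\<dots> \<le> 2 * ((norm (snd (yu s)))^2 + (norm (snd (yw s)))^2)"
        using power2_sum[of "norm (snd (yu s))" "norm (snd (yw s))"] power2_diff[of "norm (snd (yu s))" "norm (snd (yw s))"]
          zero_le_power2[of "norm (snd (yu s)) - norm (snd (yw s))"] by (smt (verit))
      finally show ?thesis unfolding P_def D_def by (simp add: power2_norm_eq_inner)
    qed
    have Pd: "(P has_real_derivative P' r) (at r)" if "0 < r" for r
      unfolding P_def[abs_def] P'_def by (rule sq_deriv[OF fst_vd[OF sol_at[OF sd that]]])
    have Dd: "(D has_real_derivative D' r) (at r)" if "0 < r" for r
      unfolding D_def[abs_def] D'_def
      by (rule DERIV_add[OF sq_deriv[OF snd_vd[OF sol_at[OF su that]]] sq_deriv[OF snd_vd[OF sol_at[OF sw that]]]])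
    have P'b: "P' r \<ge> 2 * (\<beta> r + c1) * P r" if "0 < r" for r
    proof -
      have c: "norm (snd (d r)) \<le> norm (fst (d r))" using LL_pos_cone[OF posd] that by simp
      have "fst (d r) \<bullet> fst (Ap (\<Phi> r x) (d r)) \<ge> (ell (\<Phi> r x) + Ng (\<Phi> r x) + c1) * (norm (fst (d r)))^2"
        by (rule pos_cone[OF Phi_U[OF x] c]) (use that in auto)
      hence "2 * ((ell (\<Phi> r x) + Ng (\<Phi> r x) + c1) * (norm (fst (d r)))^2) \<le> 2 * (fst (d r) \<bullet> fst (Ap (\<Phi> r x) (d r)))"
        by simp
      moreover have "2 * (\<beta> r + c1) * P r = 2 * ((ell (\<Phi> r x) + Ng (\<Phi> r x) + c1) * (norm (fst (d r)))^2)"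
        unfolding \<beta>_def P_def by (simp add: power2_norm_eq_inner)
      moreover have "P' r = 2 * (fst (d r) \<bullet> fst (Ap (\<Phi> r x) (d r)))" unfolding P'_def ..
      ultimately show ?thesis by linarith
    qed
    have D'b: "D' r \<le> 2 * \<beta> r * D r" if "0 < r" for r
    proof -
      have c1': "norm (fst (yu r)) \<le> norm (snd (yu r))" using LL_neg_cone[OF negu] that by simp
      have c2': "norm (fst (yw r)) \<le> norm (snd (yw r))" using LL_neg_cone[OF negw] that by simp
      have "snd (yu r) \<bullet> snd (Ap (\<Phi> r x) (yu r)) \<le> (Ng (\<Phi> r x) + ell (\<Phi> r x)) * (norm (snd (yu r)))^2"
        by (rule neg_cone[OF Phi_U[OF x] c1']) (use that in auto)
      moreover have "snd (yw r) \<bullet> snd (Ap (\<Phi> r x) (yw r)) \<le> (Ng (\<Phi> r x) + ell (\<Phi> r x)) * (norm (snd (yw r)))^2"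
        by (rule neg_cone[OF Phi_U[OF x] c2']) (use that in auto)
      ultimately show ?thesis unfolding D'_def D_def \<beta>_def by (simp add: power2_norm_eq_inner algebra_simps)
    qed
    define p0 where "p0 = P 0"
    define d0 where "d0 = D 0"
    have p0: "p0 > 0" unfolding p0_def P_def using d0 p0pos by simp
    have dd0: "d0 > 0" unfolding d0_def using Dpos by simp
    define S where "S = d0 / (c1 * p0)"
    have S: "0 \<le> S" unfolding S_def using p0 dd0 c1_pos by simp
    define \<phi> where "\<phi> = (\<lambda>s. exp (- 2 * c1 * s) * (P s / D s))"
    define \<phi>' where "\<phi>' = (\<lambda>r. exp (- 2 * c1 * r) * ((P' r * D r - P r * D' r) / (D r * D r)) + (exp (- 2 * c1 * r) * (- 2 * c1)) * (P r / D r))"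
    have "\<phi> 0 \<le> \<phi> S"
    proof (rule mono_open[OF S, of \<phi> \<phi>'])
      have cP: "continuous_on {0..S} P" unfolding P_def[abs_def]
        by (intro continuous_intros continuous_on_subset[OF sol_cont[OF sd]]) auto
      have cD: "continuous_on {0..S} D" unfolding D_def[abs_def]
        by (intro continuous_intros continuous_on_subset[OF sol_cont[OF su]] continuous_on_subset[OF sol_cont[OF sw]]) auto
      show "continuous_on {0..S} \<phi>" unfolding \<phi>_def
        by (intro continuous_intros cP cD) (use Dpos in force)
      fix r assume r: "0 < r" "r < S"
      have E: "((\<lambda>s. exp (- 2 * c1 * s)) has_real_derivative (exp (- 2 * c1 * r) * (- 2 * c1))) (at r)"
        by (auto intro!: derivative_eq_intros)
      have Dr: "D r > 0" using Dpos r by simp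
      show "(\<phi> has_real_derivative \<phi>' r) (at r)" unfolding \<phi>_def \<phi>'_def
        by (rule DERIV_mult'[OF E DERIV_divide[OF Pd[OF r(1)] Dd[OF r(1)]]]) (use Dr in simp)
      have Pr: "P r \<ge> 0" unfolding P_def by simp
      have e1: "P' r * D r \<ge> 2 * (\<beta> r + c1) * P r * D r"
        using mult_right_mono[OF P'b[OF r(1)], of "D r"] Dr by simp
      have e2: "P r * D' r \<le> P r * (2 * \<beta> r * D r)"
        using mult_left_mono[OF D'b[OF r(1)] Pr] .
      have num: "P' r * D r - P r * D' r - 2 * c1 * P r * D r \<ge> 0"
        using e1 e2 by (simp add: algebra_simps)
      have "\<phi>' r = exp (- 2 * c1 * r) * ((P' r * D r - P r * D' r - 2 * c1 * P r * D r) / (D r * D r))"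
        unfolding \<phi>'_def using Dr by (simp add: field_simps)
      thus "0 \<le> \<phi>' r" using num Dr by simp
    qed
    hence "p0 / d0 \<le> exp (- 2 * c1 * S) * (P S / D S)" unfolding \<phi>_def p0_def d0_def by simp
    also have "\<dots> \<le> exp (- 2 * c1 * S) * 2"
      using PleD[OF S] Dpos[OF S] by (intro mult_left_mono) (auto simp: divide_le_eq)
    finally have A: "p0 / d0 \<le> exp (- 2 * c1 * S) * 2" .
    have "exp (2 * c1 * S) * (p0 / d0) \<le> exp (2 * c1 * S) * (exp (- 2 * c1 * S) * 2)"
      by (rule mult_left_mono[OF A]) simp
    also have "\<dots> = 2" by (simp add: mult.assoc[symmetric] exp_add[symmetric])
    finally have B: "exp (2 * c1 * S) * (p0 / d0) \<le> 2" .
    have "(1 + 2 * c1 * S) * (p0 / d0) \<le> exp (2 * c1 * S) * (p0 / d0)"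
      using exp_ge_add_one_self[of "2 * c1 * S"] p0 dd0 by (intro mult_right_mono) auto
    moreover have "(1 + 2 * c1 * S) * (p0 / d0) = p0 / d0 + 2"
      unfolding S_def using p0 dd0 c1_pos by (simp add: field_simps)
    ultimately have "p0 / d0 \<le> 0" using B by linarith
    thus False using p0 dd0 by (simp add: divide_le_0_iff)
  qed
qed


lemma nbhd:
  assumes x: "x \<in> \<Gamma>" and T: "0 \<le> T"
  obtains r C M where "r > 0" "compact C" "C \<subseteq> U" "M \<ge> 0"
    "\<And>s. 0 \<le> s \<Longrightarrow> s \<le> T \<Longrightarrow> cball (\<Phi> s x) r \<subseteq> C"
    "\<And>q. q \<in> C \<Longrightarrow> norm (f' q) + norm (g' q) \<le> M"
proof -
  define K where "K = (\<lambda>s. \<Phi> s x) ` {0..T}"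
  have cK: "compact K" unfolding K_def
    by (rule compact_continuous_image[OF continuous_on_subset[OF Phi_cont[OF x]]]) auto
  have KU: "K \<subseteq> U" unfolding K_def using Phi_U[OF x] by auto
  obtain \<epsilon> where \<epsilon>: "0 < \<epsilon>" "\<And>p. p \<in> K \<Longrightarrow> \<exists>G \<in> {U}. ball p \<epsilon> \<subseteq> G"
    using Heine_Borel_lemma[OF cK, of "{U}"] KU U_open by auto
  define r where "r = \<epsilon> / 2"
  define C where "C = {p + w | p w. p \<in> K \<and> w \<in> cball 0 r}"
  have r: "r > 0" unfolding r_def using \<epsilon> by simp
  have cC: "compact C" unfolding C_def by (rule compact_sums[OF cK]) simp
  have CU: "C \<subseteq> U"
  proof
    fix q assume "q \<in> C"
    then obtain p w where pw: "q = p + w" "p \<in> K" "norm w \<le> r" unfolding C_def by auto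
    have "q \<in> ball p \<epsilon>" using pw r_def \<epsilon>(1) by (simp add: dist_norm)
    thus "q \<in> U" using \<epsilon>(2)[OF pw(2)] by auto
  qed
  have ball: "cball (\<Phi> s x) r \<subseteq> C" if "0 \<le> s" "s \<le> T" for s
  proof
    fix q assume q: "q \<in> cball (\<Phi> s x) r"
    have "q = \<Phi> s x + (q - \<Phi> s x)" by simp
    moreover have "\<Phi> s x \<in> K" unfolding K_def using that by auto
    moreover have "q - \<Phi> s x \<in> cball 0 r" using q by (simp add: dist_norm norm_minus_commute)
    ultimately show "q \<in> C" unfolding C_def by blast
  qed
  have Cne: "C \<noteq> {}" using ball[of 0] T r by auto
  have "continuous_on C (\<lambda>q. norm (f' q) + norm (g' q))"
    by (intro continuous_intros continuous_on_subset[OF f'_cont CU] continuous_on_subset[OF g'_cont CU])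
  then obtain q0 where "q0 \<in> C" "\<forall>q\<in>C. norm (f' q) + norm (g' q) \<le> norm (f' q0) + norm (g' q0)"
    using continuous_attains_sup[OF cC Cne] by blast
  thus ?thesis using that[OF r cC CU _ ball, of "norm (f' q0) + norm (g' q0)"] by auto
qed

lemma F_lip:
  assumes pC: "cball p r \<subseteq> C" and CU: "C \<subseteq> U" and Mb: "\<And>q. q \<in> C \<Longrightarrow> norm (f' q) + norm (g' q) \<le> M"
    and q: "q \<in> cball p r"
  shows "norm ((f q, g q) - (f p, g p)) \<le> M * norm (q - p)"
proof (rule differentiable_bound[of "cball p r" "\<lambda>q. (f q, g q)" "\<lambda>y v. (blinfun_apply (f' y) v, blinfun_apply (g' y) v)"])
  show "convex (cball p r)" by simp
  fix y assume y: "y \<in> cball p r"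
  hence yU: "y \<in> U" using pC CU by auto
  show "((\<lambda>q. (f q, g q)) has_derivative (\<lambda>v. (blinfun_apply (f' y) v, blinfun_apply (g' y) v))) (at y within cball p r)"
    by (rule has_derivative_at_withinI[OF has_derivative_Pair[OF f_deriv[OF yU] g_deriv[OF yU]]])
  show "onorm (\<lambda>v. (blinfun_apply (f' y) v, blinfun_apply (g' y) v)) \<le> M"
  proof (rule onorm_le)
    fix v
    have "norm (blinfun_apply (f' y) v, blinfun_apply (g' y) v) \<le> (norm (f' y) + norm (g' y)) * norm v"
      using Ap_bound[of y v] unfolding Ap_def .
    also have "\<dots> \<le> M * norm v"
    proof -
      have "y \<in> C" using y pC by auto
      hence "norm (f' y) + norm (g' y) \<le> M" by (rule Mb)
      thus ?thesis by (intro mult_right_mono) auto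
    qed
    finally show "norm (blinfun_apply (f' y) v, blinfun_apply (g' y) v) \<le> M * norm v" .
  qed
next
  show "q \<in> cball p r" by (rule q)
  have "0 \<le> dist p q" by simp
  moreover have "dist p q \<le> r" using q by simp
  ultimately have "0 \<le> r" by linarith
  thus "p \<in> cball p r" by simp
qed

lemma traj_close:
  assumes x: "x \<in> \<Gamma>" and T: "0 \<le> T" and r: "r > 0" and CU: "C \<subseteq> U" and M: "M \<ge> 0"
    and balls: "\<And>s. 0 \<le> s \<Longrightarrow> s \<le> T \<Longrightarrow> cball (\<Phi> s x) r \<subseteq> C"
    and Mb: "\<And>q. q \<in> C \<Longrightarrow> norm (f' q) + norm (g' q) \<le> M"
    and y: "y \<in> \<Gamma>" and close: "norm (y - x) < r * exp (- M * T)"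
    and s: "0 \<le> s" "s \<le> T"
  shows "norm (\<Phi> s y - \<Phi> s x) \<le> exp (M * T) * norm (y - x)" "\<Phi> s y \<in> C"
proof -
  define \<delta> where "\<delta> t = \<Phi> t y - \<Phi> t x" for t
  define e where "e t = \<delta> t \<bullet> \<delta> t" for t
  have e0: "e 0 = norm (y - x)^2" unfolding e_def \<delta>_def using flow0[OF x] flow0[OF y]
    by (simp add: power2_norm_eq_inner)
  have expMT: "exp (- M * T) \<le> 1" using M T by simp
  have e0r: "exp (2 * M * T) * e 0 < r^2"
  proof -
    have "norm (y - x) * exp (M * T) < r * exp (- M * T) * exp (M * T)"
      using close by (intro mult_strict_right_mono) auto
    also have "\<dots> = r" by (simp add: mult.assoc mult_exp_exp)
    finally have a: "norm (y - x) * exp (M * T) < r" .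
    have "(norm (y - x) * exp (M * T))^2 < r^2"
      by (rule power_strict_mono[OF a]) auto
    moreover have "(norm (y - x) * exp (M * T))^2 = exp (2 * M * T) * e 0"
    proof -
      have "exp (2 * M * T) = (exp (M * T))^2" by (metis exp_double mult.assoc)
      thus ?thesis unfolding e0 by (simp only: power_mult_distrib mult.commute)
    qed
    ultimately show ?thesis by simp
  qed
  have ec: "continuous_on {0..b} e" if "0 \<le> b" for b
    unfolding e_def[abs_def] \<delta>_def
    by (intro continuous_intros continuous_on_subset[OF Phi_cont[OF x]] continuous_on_subset[OF Phi_cont[OF y]]) auto
  have G: "e s1 \<le> exp (2 * M * s1) * e 0"
    if s1: "0 \<le> s1" "s1 \<le> T" and hyp: "\<And>t. 0 \<le> t \<Longrightarrow> t < s1 \<Longrightarrow> e t < r^2" for s1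
  proof -
    have "e s1 \<le> exp (2 * M * (s1 - 0)) * (e 0 + 0 * (s1 - 0))"
    proof (rule gron[OF s1(1) ec[OF s1(1)], of "\<lambda>t. 2 * (\<delta> t \<bullet> ((f (\<Phi> t y), g (\<Phi> t y)) - (f (\<Phi> t x), g (\<Phi> t x))))"])
      fix t assume t: "0 < t" "t < s1"
      have dd: "(\<delta> has_vector_derivative ((f (\<Phi> t y), g (\<Phi> t y)) - (f (\<Phi> t x), g (\<Phi> t x)))) (at t)"
        unfolding \<delta>_def[abs_def]
        by (rule vd_at[OF has_vector_derivative_diff[OF flow_deriv[OF y] flow_deriv[OF x]]]) (use t in auto)
      show "(e has_real_derivative 2 * (\<delta> t \<bullet> ((f (\<Phi> t y), g (\<Phi> t y)) - (f (\<Phi> t x), g (\<Phi> t x))))) (at t)"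
        unfolding e_def[abs_def] by (rule sq_deriv[OF dd])
      have "e t < r^2" using hyp t by auto
      hence "norm (\<delta> t) < r" unfolding e_def
        by (metis power2_norm_eq_inner power2_less_imp_less r less_imp_le)
      hence qin: "\<Phi> t y \<in> cball (\<Phi> t x) r" unfolding \<delta>_def by (simp add: dist_norm norm_minus_commute)
      have lip: "norm ((f (\<Phi> t y), g (\<Phi> t y)) - (f (\<Phi> t x), g (\<Phi> t x))) \<le> M * norm (\<delta> t)"
        unfolding \<delta>_def by (rule F_lip[OF balls CU Mb qin]) (use t s1 in auto)
      have "\<delta> t \<bullet> ((f (\<Phi> t y), g (\<Phi> t y)) - (f (\<Phi> t x), g (\<Phi> t x))) \<le> norm (\<delta> t) * (M * norm (\<delta> t))"
        by (rule order_trans[OF norm_cauchy_schwarz mult_left_mono[OF lip]]) simp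
      also have "\<dots> = M * e t" unfolding e_def by (simp add: power2_norm_eq_inner[symmetric] power2_eq_square)
      finally show "2 * (\<delta> t \<bullet> ((f (\<Phi> t y), g (\<Phi> t y)) - (f (\<Phi> t x), g (\<Phi> t x)))) \<le> 2 * M * e t + 0"
        by simp
    qed (use M in auto)
    thus ?thesis by simp
  qed
  have less: "e b < r^2" if b: "0 \<le> b" "b \<le> T" for b
  proof (rule first_exit[OF b(1) ec[OF b(1)]])
    have "1 * e 0 \<le> exp (2 * M * T) * e 0" using M T by (intro mult_right_mono) (auto simp: e_def)
    thus "e 0 < r^2" using e0r by simp
    fix s1 assume s1: "0 \<le> s1" "s1 \<le> b" and hyp: "\<And>t. 0 \<le> t \<Longrightarrow> t < s1 \<Longrightarrow> e t < r^2"
    have "e s1 \<le> exp (2 * M * s1) * e 0" using G[OF s1(1) _ hyp] s1 b by auto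
    also have "\<dots> \<le> exp (2 * M * T) * e 0"
      using s1 b M by (intro mult_right_mono) (auto simp: e_def intro: mult_left_mono)
    finally show "e s1 < r^2" using e0r by simp
  qed
  have es: "e s \<le> exp (2 * M * T) * e 0"
  proof -
    have "e s \<le> exp (2 * M * s) * e 0" using G[OF s less] s by auto
    also have "\<dots> \<le> exp (2 * M * T) * e 0" using s M by (intro mult_right_mono) (auto simp: e_def intro: mult_left_mono)
    finally show ?thesis .
  qed
  have "(norm (\<delta> s))^2 \<le> (exp (M * T) * norm (y - x))^2"
  proof -
    have "exp (2 * M * T) = (exp (M * T))^2" by (metis exp_double mult.assoc)
    hence "exp (2 * M * T) * e 0 = (exp (M * T) * norm (y - x))^2" unfolding e0 by (simp only: power_mult_distrib)
    moreover have "e s = (norm (\<delta> s))^2" unfolding e_def by (simp add: power2_norm_eq_inner)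
    ultimately show ?thesis using es by simp
  qed
  thus "norm (\<Phi> s y - \<Phi> s x) \<le> exp (M * T) * norm (y - x)"
    unfolding \<delta>_def by (rule power2_le_imp_le) simp
  have "e s < r^2" by (rule less[OF s])
  hence "norm (\<delta> s) < r" unfolding e_def
    by (metis power2_norm_eq_inner power2_less_imp_less r less_imp_le)
  hence "\<Phi> s y \<in> cball (\<Phi> s x) r" unfolding \<delta>_def by (simp add: dist_norm norm_minus_commute)
  thus "\<Phi> s y \<in> C" using balls[OF s] by auto
qed


lemma Ap_diff_p: "norm (Ap p u - Ap p' u) \<le> (norm (f' p - f' p') + norm (g' p - g' p')) * norm u"
proof -
  have "Ap p u - Ap p' u = (blinfun_apply (f' p - f' p') u, blinfun_apply (g' p - g' p') u)"
    unfolding Ap_def by (simp add: blinfun.diff_left)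
  hence "norm (Ap p u - Ap p' u) \<le> norm (blinfun_apply (f' p - f' p') u) + norm (blinfun_apply (g' p - g' p') u)"
    by (simp add: norm_Pair_le)
  also have "\<dots> \<le> norm (f' p - f' p') * norm u + norm (g' p - g' p') * norm u"
    by (intro add_mono norm_blinfun)
  finally show ?thesis by (simp add: algebra_simps)
qed

lemma unif_cont_C:
  assumes cC: "compact C" and CU: "C \<subseteq> U" and e: "e > 0"
  obtains d where "d > 0" "\<And>p q. p \<in> C \<Longrightarrow> q \<in> C \<Longrightarrow> dist q p < d \<Longrightarrow> norm (f' q - f' p) + norm (g' q - g' p) < e"
proof -
  have uf: "uniformly_continuous_on C f'"
    by (rule compact_uniformly_continuous[OF continuous_on_subset[OF f'_cont CU] cC])
  have ug: "uniformly_continuous_on C g'"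
    by (rule compact_uniformly_continuous[OF continuous_on_subset[OF g'_cont CU] cC])
  obtain d1 where d1: "d1 > 0" "\<forall>p\<in>C. \<forall>q\<in>C. dist q p < d1 \<longrightarrow> dist (f' q) (f' p) < e / 2"
    using uf e unfolding uniformly_continuous_on_def by (meson half_gt_zero)
  obtain d2 where d2: "d2 > 0" "\<forall>p\<in>C. \<forall>q\<in>C. dist q p < d2 \<longrightarrow> dist (g' q) (g' p) < e / 2"
    using ug e unfolding uniformly_continuous_on_def by (meson half_gt_zero)
  show ?thesis
  proof (rule that[of "min d1 d2"])
    show "min d1 d2 > 0" using d1 d2 by simp
    fix p q assume "p \<in> C" "q \<in> C" "dist q p < min d1 d2"
    hence "dist (f' q) (f' p) < e / 2" "dist (g' q) (g' p) < e / 2" using d1 d2 by auto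
    thus "norm (f' q - f' p) + norm (g' q - g' p) < e" by (simp add: dist_norm)
  qed
qed

lemma Q_est:
  assumes x: "x \<in> \<Gamma>" and T: "0 \<le> T"
  shows "\<exists>K1\<ge>0. \<forall>\<eta>>0. \<exists>\<delta>>0. \<forall>y\<in>\<Gamma>. \<forall>v'. norm (y - x) < \<delta> \<longrightarrow>
           (norm (Q T y v' - Q T x v))^2 \<le> K1 * ((norm (v' - v))^2 + \<eta>^2)"
proof -
  obtain r C M where r: "r > 0" and cC: "compact C" and CU: "C \<subseteq> U" and M: "M \<ge> 0"
    and balls: "\<And>s. 0 \<le> s \<Longrightarrow> s \<le> T \<Longrightarrow> cball (\<Phi> s x) r \<subseteq> C"
    and Mb: "\<And>q. q \<in> C \<Longrightarrow> norm (f' q) + norm (g' q) \<le> M"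
    using nbhd[OF x T] by blast
  have xC: "\<Phi> s x \<in> C" if "0 \<le> s" "s \<le> T" for s using balls[OF that] r by auto
  define B where "B = exp (2 * M * T) * (v \<bullet> v)"
  have B0: "B \<ge> 0" unfolding B_def by simp
  have qB: "Q s x v \<bullet> Q s x v \<le> B" if s: "0 \<le> s" "s \<le> T" for s
  proof -
    have "Q s x v \<bullet> Q s x v \<le> exp (2 * M * s) * (Q 0 x v \<bullet> Q 0 x v)"
      by (rule sol_growth(1)[OF Q_sol[OF x] x s(1) M]) (use xC Mb s in auto)
    also have "\<dots> = exp (2 * M * s) * (v \<bullet> v)" using Q0[OF x] by simp
    also have "\<dots> \<le> exp (2 * M * T) * (v \<bullet> v)" using s M
      by (intro mult_right_mono) (auto intro: mult_left_mono)
    finally show ?thesis unfolding B_def .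
  qed
  define K1 where "K1 = exp ((2 * M + 1) * T) * (1 + B * T)"
  have K1: "K1 \<ge> 0" unfolding K1_def using B0 T by simp
  have "\<forall>\<eta>>0. \<exists>\<delta>>0. \<forall>y\<in>\<Gamma>. \<forall>v'. norm (y - x) < \<delta> \<longrightarrow>
           (norm (Q T y v' - Q T x v))^2 \<le> K1 * ((norm (v' - v))^2 + \<eta>^2)"
  proof (intro allI impI)
    fix \<eta> :: real assume \<eta>: "\<eta> > 0"
    obtain d where d: "d > 0" "\<And>p q. p \<in> C \<Longrightarrow> q \<in> C \<Longrightarrow> dist q p < d \<Longrightarrow> norm (f' q - f' p) + norm (g' q - g' p) < \<eta>"
      using unif_cont_C[OF cC CU \<eta>] by blast
    define \<delta> where "\<delta> = min (r * exp (- M * T)) (d * exp (- M * T))"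
    have \<delta>: "\<delta> > 0" unfolding \<delta>_def using r d by simp
    show "\<exists>\<delta>>0. \<forall>y\<in>\<Gamma>. \<forall>v'. norm (y - x) < \<delta> \<longrightarrow> (norm (Q T y v' - Q T x v))^2 \<le> K1 * ((norm (v' - v))^2 + \<eta>^2)"
    proof (intro exI[of _ \<delta>] conjI \<delta> ballI allI impI)
      fix y v' assume y: "y \<in> \<Gamma>" and close: "norm (y - x) < \<delta>"
      have close1: "norm (y - x) < r * exp (- M * T)" using close unfolding \<delta>_def by simp
      have yC: "\<Phi> s y \<in> C" if "0 \<le> s" "s \<le> T" for s
        by (rule traj_close(2)[OF x T r CU M balls Mb y close1 that])
      have near: "dist (\<Phi> s y) (\<Phi> s x) < d" if s: "0 \<le> s" "s \<le> T" for s
      proof -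
        have "norm (\<Phi> s y - \<Phi> s x) \<le> exp (M * T) * norm (y - x)"
          by (rule traj_close(1)[OF x T r CU M balls Mb y close1 s])
        also have "\<dots> < exp (M * T) * (d * exp (- M * T))"
          using close unfolding \<delta>_def by (intro mult_strict_left_mono) auto
        also have "\<dots> = d" by (simp add: mult.assoc[symmetric] mult.commute[of "exp (M * T)"] mult_exp_exp)
        finally show ?thesis by (simp add: dist_norm)
      qed
      define w where "w s = Q s y v' - Q s x v" for s
      define e where "e s = w s \<bullet> w s" for s
      have sy: "sol y (\<lambda>s. Q s y v')" by (rule Q_sol[OF y])
      have sx: "sol x (\<lambda>s. Q s x v)" by (rule Q_sol[OF x])
      have ec: "continuous_on {0..T} e" unfolding e_def[abs_def] w_def
        by (intro continuous_intros continuous_on_subset[OF sol_cont[OF sy]] continuous_on_subset[OF sol_cont[OF sx]]) auto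
      have "e T \<le> exp ((2 * M + 1) * (T - 0)) * (e 0 + \<eta>^2 * B * (T - 0))"
      proof (rule gron[OF T ec, of "\<lambda>t. 2 * (w t \<bullet> (Ap (\<Phi> t y) (Q t y v') - Ap (\<Phi> t x) (Q t x v)))"])
        fix t assume t: "0 < t" "t < T"
        have wd: "(w has_vector_derivative (Ap (\<Phi> t y) (Q t y v') - Ap (\<Phi> t x) (Q t x v))) (at t)"
          unfolding w_def[abs_def] by (rule has_vector_derivative_diff[OF sol_at[OF sy t(1)] sol_at[OF sx t(1)]])
        show "(e has_real_derivative 2 * (w t \<bullet> (Ap (\<Phi> t y) (Q t y v') - Ap (\<Phi> t x) (Q t x v)))) (at t)"
          unfolding e_def[abs_def] by (rule sq_deriv[OF wd])
        have t0: "0 \<le> t" "t \<le> T" using t by auto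
        define \<Delta> where "\<Delta> = Ap (\<Phi> t y) (Q t x v) - Ap (\<Phi> t x) (Q t x v)"
        have split: "Ap (\<Phi> t y) (Q t y v') - Ap (\<Phi> t x) (Q t x v) = Ap (\<Phi> t y) (w t) + \<Delta>"
        proof -
          have "Q t y v' = w t + Q t x v" unfolding w_def by simp
          thus ?thesis unfolding \<Delta>_def by (simp add: Ap_add)
        qed
        have a1: "w t \<bullet> Ap (\<Phi> t y) (w t) \<le> M * e t"
        proof -
          have "\<bar>w t \<bullet> Ap (\<Phi> t y) (w t)\<bar> \<le> (norm (f' (\<Phi> t y)) + norm (g' (\<Phi> t y))) * (w t \<bullet> w t)"
            by (rule Ap_inner)
          also have "\<dots> \<le> M * (w t \<bullet> w t)" using Mb[OF yC[OF t0]] by (intro mult_right_mono) auto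
          finally show ?thesis unfolding e_def by simp
        qed
        have nD: "norm \<Delta> \<le> \<eta> * norm (Q t x v)"
        proof -
          have "norm \<Delta> \<le> (norm (f' (\<Phi> t y) - f' (\<Phi> t x)) + norm (g' (\<Phi> t y) - g' (\<Phi> t x))) * norm (Q t x v)"
            unfolding \<Delta>_def by (rule Ap_diff_p)
          also have "\<dots> \<le> \<eta> * norm (Q t x v)"
            using d(2)[OF xC[OF t0] yC[OF t0] near[OF t0]] by (intro mult_right_mono) auto
          finally show ?thesis .
        qed
        have a2: "2 * (w t \<bullet> \<Delta>) \<le> e t + \<eta>^2 * B"
        proof -
          have "w t \<bullet> \<Delta> \<le> norm (w t) * norm \<Delta>" by (rule norm_cauchy_schwarz)
          also have "\<dots> \<le> norm (w t) * (\<eta> * norm (Q t x v))" by (intro mult_left_mono nD) simp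
          finally have "2 * (w t \<bullet> \<Delta>) \<le> 2 * norm (w t) * (\<eta> * norm (Q t x v))" by simp
          also have "\<dots> \<le> (norm (w t))^2 + (\<eta> * norm (Q t x v))^2" by (rule sum_squares_bound)
          also have "(\<eta> * norm (Q t x v))^2 = \<eta>^2 * (Q t x v \<bullet> Q t x v)"
            by (simp add: power_mult_distrib power2_norm_eq_inner)
          also have "\<eta>^2 * (Q t x v \<bullet> Q t x v) \<le> \<eta>^2 * B" by (intro mult_left_mono qB t0) simp
          finally show ?thesis unfolding e_def by (simp add: power2_norm_eq_inner)
        qed
        show "2 * (w t \<bullet> (Ap (\<Phi> t y) (Q t y v') - Ap (\<Phi> t x) (Q t x v))) \<le> (2 * M + 1) * e t + \<eta>^2 * B"
          unfolding split inner_add_right using a1 a2 by (simp add: algebra_simps)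
      qed (use M B0 in auto)
      hence eT: "e T \<le> exp ((2 * M + 1) * T) * (e 0 + \<eta>^2 * B * T)" by simp
      have e0: "e 0 = (norm (v' - v))^2" unfolding e_def w_def using Q0[OF x] Q0[OF y]
        by (simp add: power2_norm_eq_inner)
      have "e 0 + \<eta>^2 * B * T \<le> (1 + B * T) * ((norm (v' - v))^2 + \<eta>^2)"
        unfolding e0 using B0 T by (simp add: algebra_simps)
      hence "e T \<le> exp ((2 * M + 1) * T) * ((1 + B * T) * ((norm (v' - v))^2 + \<eta>^2))"
        using eT by (smt (verit) exp_gt_zero mult_left_mono)
      moreover have "e T = (norm (Q T y v' - Q T x v))^2" unfolding e_def w_def by (simp add: power2_norm_eq_inner)
      ultimately show "(norm (Q T y v' - Q T x v))^2 \<le> K1 * ((norm (v' - v))^2 + \<eta>^2)"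
        unfolding K1_def by (simp add: mult.assoc)
    qed
  qed
  thus ?thesis using K1 by blast
qed


lemma H_ex1: assumes x: "x \<in> \<Gamma>" shows "\<exists>!a. (a, z) \<in> Tsp Q x"
  using exist_T[OF x, of z] uniq_T[OF x] by blast

lemma H_spec: assumes x: "x \<in> \<Gamma>" shows "(Hmap Q x z, z) \<in> Tsp Q x"
  unfolding Hmap_def by (rule theI'[OF H_ex1[OF x]])

lemma H_uniq: assumes x: "x \<in> \<Gamma>" and a: "(a, z) \<in> Tsp Q x" shows "Hmap Q x z = a"
  using uniq_T[OF x H_spec[OF x] a] .

lemma H_bound: assumes x: "x \<in> \<Gamma>" shows "norm (Hmap Q x z) \<le> norm z"
proof -
  have "LL (Q 0 x (Hmap Q x z, z)) \<le> 0" by (rule T_neg[OF H_spec[OF x]]) simp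
  thus ?thesis using LL_neg_cone[of "(Hmap Q x z, z)"] Q0[OF x] by simp
qed

lemma Q_seq:
  assumes x: "x \<in> \<Gamma>" and T: "0 \<le> T" and xs: "\<And>k. xs k \<in> \<Gamma>" and xl: "xs \<longlonglongrightarrow> x" and vl: "vs \<longlonglongrightarrow> v"
  shows "(\<lambda>k. Q T (xs k) (vs k)) \<longlonglongrightarrow> Q T x v"
proof -
  obtain K1 where K1: "K1 \<ge> 0" and est: "\<forall>\<eta>>0. \<exists>\<delta>>0. \<forall>y\<in>\<Gamma>. \<forall>v'. norm (y - x) < \<delta> \<longrightarrow>
           (norm (Q T y v' - Q T x v))^2 \<le> K1 * ((norm (v' - v))^2 + \<eta>^2)"
    using Q_est[OF x T, of v] by blast
  show ?thesis unfolding tendsto_iff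
  proof (intro allI impI)
    fix \<epsilon> :: real assume \<epsilon>: "\<epsilon> > 0"
    define \<rho> where "\<rho> = \<epsilon> / (2 * (K1 + 1))"
    have \<rho>: "\<rho> > 0" unfolding \<rho>_def using \<epsilon> K1 by simp
    obtain \<delta> where \<delta>: "\<delta> > 0" and est': "\<And>y v'. y \<in> \<Gamma> \<Longrightarrow> norm (y - x) < \<delta> \<Longrightarrow>
           (norm (Q T y v' - Q T x v))^2 \<le> K1 * ((norm (v' - v))^2 + \<rho>^2)"
      using est \<rho> by blast
    have ev1: "eventually (\<lambda>k. dist (xs k) x < \<delta>) sequentially" using xl \<delta> unfolding tendsto_iff by blast
    have ev2: "eventually (\<lambda>k. dist (vs k) v < \<rho>) sequentially" using vl \<rho> unfolding tendsto_iff by blast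
    have key: "K1 * (2 * \<rho>^2) < \<epsilon>^2"
    proof -
      have e1: "2 * (K1 + 1) * \<rho> = \<epsilon>" unfolding \<rho>_def using K1 by simp
      have "K1 * \<rho> \<ge> 0" using K1 \<rho> by simp
      hence lt: "\<rho> < \<epsilon>" using e1 \<rho> by (simp add: algebra_simps)
      have "K1 * (2 * \<rho>^2) \<le> (K1 + 1) * (2 * \<rho>^2)" by (intro mult_right_mono) auto
      also have "\<dots> = (2 * (K1 + 1) * \<rho>) * \<rho>" by (simp add: power2_eq_square algebra_simps)
      also have "\<dots> = \<epsilon> * \<rho>" using e1 by simp
      also have "\<dots> < \<epsilon> * \<epsilon>" using lt \<epsilon> by (intro mult_strict_left_mono)
      finally show ?thesis by (simp add: power2_eq_square)
    qed
    show "eventually (\<lambda>k. dist (Q T (xs k) (vs k)) (Q T x v) < \<epsilon>) sequentially"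
      using ev1 ev2
    proof eventually_elim
      case (elim k)
      have "(norm (vs k - v))^2 \<le> \<rho>^2" using elim(2) by (intro power_mono) (auto simp: dist_norm)
      hence "(norm (Q T (xs k) (vs k) - Q T x v))^2 \<le> K1 * (2 * \<rho>^2)"
        using est'[OF xs, of k "vs k"] elim(1) K1 by (smt (verit, best) dist_norm mult_left_mono)
      hence "(norm (Q T (xs k) (vs k) - Q T x v))^2 < \<epsilon>^2" using key by linarith
      hence "norm (Q T (xs k) (vs k) - Q T x v) < \<epsilon>" by (rule power2_less_imp_less) (use \<epsilon> in simp)
      thus ?case by (simp add: dist_norm)
    qed
  qed
qed

lemma LL_tendsto: "X \<longlonglongrightarrow> v \<Longrightarrow> (\<lambda>n. LL (X n)) \<longlonglongrightarrow> LL v"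
  unfolding LL_def by (intro tendsto_intros)

lemma main: "continuous_on \<Gamma> (\<lambda>x. Hmap Q x z)"
proof (rule continuous_on_sequentiallyI)
  fix u a assume u: "\<forall>n. u n \<in> \<Gamma>" and a: "a \<in> \<Gamma>" and ul: "u \<longlonglongrightarrow> a"
  show "(\<lambda>n. Hmap Q (u n) z) \<longlonglongrightarrow> Hmap Q a z"
  proof (rule ccontr)
    assume "\<not> ?thesis"
    then obtain \<epsilon> where \<epsilon>: "\<epsilon> > 0" and nev: "\<not> eventually (\<lambda>n. dist (Hmap Q (u n) z) (Hmap Q a z) < \<epsilon>) sequentially"
      unfolding tendsto_iff by blast
    define S where "S = {n. \<not> dist (Hmap Q (u n) z) (Hmap Q a z) < \<epsilon>}"
    have "infinite S" unfolding infinite_nat_iff_unbounded_le S_def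
      using nev unfolding eventually_sequentially by blast
    then obtain r1 :: "nat \<Rightarrow> nat" where r1: "strict_mono r1" "\<And>n. r1 n \<in> S"
      using infinite_enumerate by blast
    have "seq_compact (cball (0::'a) (norm z))" by (rule compact_imp_seq_compact) simp
    moreover have "\<forall>n. Hmap Q (u (r1 n)) z \<in> cball 0 (norm z)" using H_bound u by simp
    ultimately obtain l r2 where l: "l \<in> cball 0 (norm z)" and r2: "strict_mono r2"
      and lim: "((\<lambda>n. Hmap Q (u (r1 n)) z) \<circ> r2) \<longlonglongrightarrow> l"
      by (rule seq_compactE)
    define xs where "xs n = u (r1 (r2 n))" for n
    define as where "as n = Hmap Q (xs n) z" for n
    have xs: "\<And>n. xs n \<in> \<Gamma>" unfolding xs_def using u by simp
    have sm: "strict_mono (r1 \<circ> r2)" using r1(1) r2 by (rule strict_mono_o)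
    have xl: "xs \<longlonglongrightarrow> a" unfolding xs_def using LIMSEQ_subseq_LIMSEQ[OF ul sm] by (simp add: o_def)
    have al: "as \<longlonglongrightarrow> l" using lim unfolding as_def xs_def by (simp add: o_def)
    have "(l, z) \<in> Tsp Q a" unfolding Tsp_def
    proof (intro CollectI allI impI)
      fix t :: real assume t: "0 \<le> t"
      have "(\<lambda>n. Q t (xs n) (as n, z)) \<longlonglongrightarrow> Q t a (l, z)"
        by (rule Q_seq[OF a t xs xl]) (intro tendsto_intros al)
      hence "(\<lambda>n. LL (Q t (xs n) (as n, z))) \<longlonglongrightarrow> LL (Q t a (l, z))" by (rule LL_tendsto)
      moreover have "\<forall>n\<ge>0. LL (Q t (xs n) (as n, z)) \<le> 0"
        unfolding as_def using T_neg[OF H_spec[OF xs] t] by blast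
      ultimately have "LL (Q t a (l, z)) \<le> 0" by (intro LIMSEQ_le_const2) blast+
      thus "Lfun (Q t a (l, z)) 0 \<le> 0" unfolding Lfun0 .
    qed
    hence la: "Hmap Q a z = l" by (rule H_uniq[OF a])
    have far: "\<And>n. \<not> dist (as n) (Hmap Q a z) < \<epsilon>" unfolding as_def xs_def using r1(2) unfolding S_def by simp
    have "eventually (\<lambda>n. dist (as n) l < \<epsilon>) sequentially" using al \<epsilon> unfolding tendsto_iff by blast
    then obtain N where "\<And>n. n \<ge> N \<Longrightarrow> dist (as n) l < \<epsilon>" unfolding eventually_sequentially by blast
    thus False using far[of N] la by auto
  qed
qed

end

theorem lemma2p10:
  fixes f :: "('a::euclidean_space \<times> 'b::euclidean_space) \<Rightarrow> 'a"
    and g :: "('a \<times> 'b) \<Rightarrow> 'b"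
    and f' :: "('a \<times> 'b) \<Rightarrow> ('a \<times> 'b) \<Rightarrow>\<^sub>L 'a"
    and g' :: "('a \<times> 'b) \<Rightarrow> ('a \<times> 'b) \<Rightarrow>\<^sub>L 'b"
    and U \<Gamma> :: "('a \<times> 'b) set"
    and \<alpha> ell :: "('a \<times> 'b) \<Rightarrow> real"
    and c1 :: real
    and \<Phi> :: "real \<Rightarrow> ('a \<times> 'b) \<Rightarrow> ('a \<times> 'b)"
    and Q :: "real \<Rightarrow> ('a \<times> 'b) \<Rightarrow> ('a \<times> 'b) \<Rightarrow> ('a \<times> 'b)"
    and zz :: 'b
  assumes U_open: "open U" and U_convex: "convex U"
    and H1: "\<exists>d>0. \<forall>x\<in>U. Ccone x \<inter> U \<subseteq> boxd d x"
    and f_deriv: "\<And>x. x \<in> U \<Longrightarrow> (f has_derivative blinfun_apply (f' x)) (at x)"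
    and g_deriv: "\<And>x. x \<in> U \<Longrightarrow> (g has_derivative blinfun_apply (g' x)) (at x)"
    and f'_cont: "continuous_on U f'" and g'_cont: "continuous_on U g'"
    and \<alpha>_cont: "continuous_on U \<alpha>" and ell_cont: "continuous_on U ell"
    and \<alpha>_pos: "\<And>x. x \<in> U \<Longrightarrow> \<alpha> x > 0"
    and ell_nonneg: "\<And>x. x \<in> U \<Longrightarrow> ell x \<ge> 0"
    and c1_pos: "c1 > 0"
    and H2a: "\<And>x a'. x \<in> U \<Longrightarrow> a' \<bullet> f' x (a', 0) \<ge> \<alpha> x * (norm a')^2"
    and H2z: "\<And>x z'. x \<in> U \<Longrightarrow> z' \<bullet> g' x (0, z') \<le> ell x * (norm z')^2"
    and H2c: "\<And>x. x \<in> U \<Longrightarrow>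
       \<alpha> x \<ge> ell x + onorm (\<lambda>z'. f' x (0, z')) + onorm (\<lambda>a'. g' x (a', 0)) + c1"
    and \<Gamma>_sub: "\<Gamma> \<subseteq> U"
    and flow0: "\<And>x. x \<in> \<Gamma> \<Longrightarrow> \<Phi> 0 x = x"
    and flow_deriv: "\<And>x t. x \<in> \<Gamma> \<Longrightarrow> t \<ge> 0 \<Longrightarrow>
       ((\<lambda>s. \<Phi> s x) has_vector_derivative (f (\<Phi> t x), g (\<Phi> t x))) (at t within {0..})"
    and flow_inv: "\<And>x t. x \<in> \<Gamma> \<Longrightarrow> t \<ge> 0 \<Longrightarrow> \<Phi> t x \<in> \<Gamma>"
    and proj: "snd ` \<Gamma> = snd ` U"
    and Q0: "\<And>x v. x \<in> \<Gamma> \<Longrightarrow> Q 0 x v = v"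
    and Q_deriv: "\<And>x v t. x \<in> \<Gamma> \<Longrightarrow> t \<ge> 0 \<Longrightarrow>
       ((\<lambda>s. Q s x v) has_vector_derivative
          (f' (\<Phi> t x) (Q t x v), g' (\<Phi> t x) (Q t x v))) (at t within {0..})"
  shows "continuous_on \<Gamma> (\<lambda>x. Hmap Q x zz)"
proof -
  interpret setting f g f' g' U \<Gamma> \<alpha> ell c1 \<Phi> Q
    by (rule setting.intro[OF assms])
  show ?thesis by (rule main)
qed

end
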